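(* Let $n$ be odd and consider $n$ particles on $\mathbb{M}^2$ lying on one geodesic (the real axis), with masses $m_1>0$, $m_2=m_3=1$, $m_4=m_5>0$, $\dots$, $m_{n-1}=m_n>0$ and initial positions $z_1=0$, $z_{2k}=-z_{2k+1}$ real for $k=1,\dots,(n-1)/2$, with $0<z_2<z_4<\dots<z_{n-1}$. Then there do not exist relative equilibria if any of the following holds: (1) all $n$ particles are inside the geodesic circle $|z|=1$ (i.e. $z_{n-1}<1$); (2) all particles except bodies $1,2,3$ are outside the geodesic circle while bodies $2,3$ are inside (i.e. $z_2<1<z_4$), and $z_{n-1}<1/z_2$; (3) all particles except bodies $n-1$ and $n$ are inside the geodesic circle (i.e. $z_{n-3}<1<z_{n-1}$), and $z_{n-1}<1/z_{n-3}$.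
   Context: $\mathbb{M}^2$ is the complex plane with metric $ds^2=\frac{4\,dz\,d\bar z}{(1+|z|^2)^2}$; the distance satisfies $\cos d(z_k,z_j)=\frac{2(z_k\bar z_j+z_j\bar z_k)+(|z_k|^2-1)(|z_j|^2-1)}{(|z_k|^2+1)(|z_j|^2+1)}$. The curved $n$-body problem has kinetic energy $T=\frac12\sum_i m_i\frac{4|\dot z_i|^2}{(1+|z_i|^2)^2}$ and force function $U=\sum_{i<j}m_im_j\cot d(z_i,z_j)$. A relative equilibrium is a solution invariant under a one-parameter subgroup of isometries; it suffices to consider solutions $w(t)=e^{it}z$. Following earlier work, positions $z_1,\dots,z_n$ ($r_l=|z_l|$) form a relative equilibrium iff for each $i$: $\frac{(1-r_i^2)z_i}{4(1+r_i^2)^4}=-\sum_{j\ne i}\frac{m_j(r_j^2+1)^2(1+z_i\bar z_j)(z_j-z_i)}{T_{ij}^{3/2}}$, with $T_{ij}=(r_i^2+1)^2(r_j^2+1)^2-[2(z_i\bar z_j+z_j\bar z_i)+(r_i^2-1)(r_j^2-1)]^2$. Singular configurations are excluded. *)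

theory Defs
  imports Complex_Main
begin

definition Tij :: "complex \<Rightarrow> complex \<Rightarrow> real" where
  "Tij zi zj =
     ((cmod zi)^2 + 1)^2 * ((cmod zj)^2 + 1)^2
     - (Re (2 * (zi * cnj zj + zj * cnj zi)) + ((cmod zi)^2 - 1) * ((cmod zj)^2 - 1))^2"

text \<open>Singular configurations (T_ij = 0 for some i ~= j: collisions or antipodal
  bodies) are excluded.\<close>
definition nonsingular :: "nat \<Rightarrow> (nat \<Rightarrow> complex) \<Rightarrow> bool" where
  "nonsingular n z \<longleftrightarrow> (\<forall>i\<in>{1..n}. \<forall>j\<in>{1..n}. i \<noteq> j \<longrightarrow> Tij (z i) (z j) \<noteq> 0)"

definition rel_eq_eqns :: "nat \<Rightarrow> (nat \<Rightarrow> real) \<Rightarrow> (nat \<Rightarrow> complex) \<Rightarrow> bool" where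
  "rel_eq_eqns n m z \<longleftrightarrow>
     (\<forall>i\<in>{1..n}.
        (1 - complex_of_real ((cmod (z i))^2)) * z i
          / (4 * (1 + complex_of_real ((cmod (z i))^2))^4)
        = - (\<Sum>j\<in>{1..n} - {i}.
               complex_of_real (m j * ((cmod (z j))^2 + 1)^2)
                 * (1 + z i * cnj (z j)) * (z j - z i)
               / complex_of_real ((Tij (z i) (z j)) powr (3/2))))"

definition relative_equilibrium :: "nat \<Rightarrow> (nat \<Rightarrow> real) \<Rightarrow> (nat \<Rightarrow> complex) \<Rightarrow> bool" where
  "relative_equilibrium n m z \<longleftrightarrow> nonsingular n z \<and> rel_eq_eqns n m z"

end

theory Submission
  imports Defs
begin

definition Lf :: "real \<Rightarrow> real" where
  "Lf p = (1 - p^2) * p / (4 * (1 + p^2)^4)"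
definition ff :: "real \<Rightarrow> real \<Rightarrow> real" where
  "ff p y = (1 + y^2)^2 * ((1 + p*y) * (p - y)) / \<bar>2 * ((1 + p*y) * (p - y))\<bar>^3"

lemma Tij_real: "Tij (of_real p) (of_real y) = (2 * ((1 + p*y) * (p - y)))^2"
  unfolding Tij_def by (simp add: power2_eq_square algebra_simps)

lemma powr_sq: "((u::real)^2) powr (3/2) = \<bar>u\<bar>^3"
proof (cases "u = 0")
  case True then show ?thesis by simp
next
  case False
  have e: "(u^2) = \<bar>u\<bar> powr 2" using False by (simp add: powr_realpow)
  have "(\<bar>u\<bar> powr 2) powr (3/2) = \<bar>u\<bar> powr (2 * (3/2))" by (rule powr_powr)
  then have "((u::real)^2) powr (3/2) = \<bar>u\<bar> powr (2 * (3/2))" by (simp only: e)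
  also have "\<dots> = \<bar>u\<bar> powr (real 3)" by simp
  also have "\<dots> = \<bar>u\<bar>^3" using False by (simp add: powr_realpow)
  finally show ?thesis .
qed

lemma term_real:
  "complex_of_real (mj * ((cmod (complex_of_real y))^2 + 1)^2)
     * (1 + complex_of_real p * cnj (complex_of_real y)) * (complex_of_real y - complex_of_real p)
     / complex_of_real ((Tij (complex_of_real p) (complex_of_real y)) powr (3/2))
   = complex_of_real (- (mj * ff p y))"
proof -
  define D where "D = \<bar>2 * ((1 + p*y) * (p - y))\<bar>^3"
  have "complex_of_real (mj * ((cmod (complex_of_real y))^2 + 1)^2)
     * (1 + complex_of_real p * cnj (complex_of_real y)) * (complex_of_real y - complex_of_real p)
     / complex_of_real ((Tij (complex_of_real p) (complex_of_real y)) powr (3/2))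
     = complex_of_real (mj * (y^2 + 1)^2) * complex_of_real ((1 + p*y) * (y - p)) / complex_of_real D"
    unfolding Tij_real powr_sq D_def by (simp add: mult.assoc)
  also have "\<dots> = complex_of_real (mj * (y^2 + 1)^2 * ((1 + p*y) * (y - p)) / D)"
    by simp
  also have "mj * (y^2 + 1)^2 * ((1 + p*y) * (y - p)) / D = - (mj * ff p y)"
  proof -
    have "mj * (y^2 + 1)^2 * ((1 + p*y) * (y - p)) = - (mj * ((1 + y^2)^2 * ((1 + p*y) * (p - y))))"
      by (simp add: algebra_simps)
    then have "mj * (y^2 + 1)^2 * ((1 + p*y) * (y - p)) / D = - (mj * ((1 + y^2)^2 * ((1 + p*y) * (p - y)))) / D"
      by simp
    also have "\<dots> = - (mj * ff p y)" unfolding ff_def D_def by (simp only: minus_divide_left times_divide_eq_right)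
    finally show ?thesis .
  qed
  finally show ?thesis .
qed

lemma Lf_complex: "(1 - complex_of_real ((cmod (complex_of_real p))^2)) * complex_of_real p
          / (4 * (1 + complex_of_real ((cmod (complex_of_real p))^2))^4) = complex_of_real (Lf p)"
  by (simp add: Lf_def)

lemma ff_P: "ff p y = (1 + y^2)^2 * ((1 + p*y) * (p - y)) / (8 * \<bar>(1 + p*y) * (p - y)\<bar>^3)"
  unfolding ff_def by (simp only: abs_mult power_mult_distrib) simp

lemma ff_posP: assumes "(1 + p*y) * (p - y) > 0" shows "ff p y = (1 + y^2)^2 / (8 * ((1 + p*y) * (p - y))^2)"
  using assms unfolding ff_P by (simp add: power3_eq_cube power2_eq_square)

lemma ff_negP: assumes "(1 + p*y) * (p - y) < 0" shows "ff p y = - ((1 + y^2)^2 / (8 * ((1 + p*y) * (p - y))^2))"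
  using assms unfolding ff_P by (simp add: power3_eq_cube power2_eq_square)

lemma ff_lb: assumes "(1 + p*y) * (p - y) > 0" shows "ff p y \<ge> 1 / (8 * ((1 + p*y) * (p - y))^2)"
  unfolding ff_posP[OF assms] using assms
  by (intro divide_right_mono) (auto simp: one_le_power)

lemma cubic: fixes p :: real assumes "0 < p" shows "p * (1 - p*p) < 1/2"
proof -
  define t where "t = (p - 3/5)^2 * (p + 6/5)"
  have "p*p*p - p + 1/2 = t + 2/25 * p + 17/250"
    unfolding t_def by (simp add: power2_eq_square field_simps)
  moreover have "t \<ge> 0" unfolding t_def using assms by simp
  moreover have "p * (1 - p*p) = p - p*p*p" by (simp add: algebra_simps)
  ultimately show ?thesis using assms by linarith
qed

lemma self_bound: assumes "0 < p" "p < 1" shows "ff p (-p) > Lf p"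
proof -
  define P where "P = (1 - p*p) * (2*p)"
  have "p*p < p*1" using assms by (intro mult_strict_left_mono) auto
  then have pp: "p*p < 1" using assms by linarith
  have P0: "P > 0" unfolding P_def using assms pp by simp
  have P1: "P < 1" unfolding P_def using cubic[OF assms(1)] by (simp add: algebra_simps)
  have Pe: "(1 + p*(-p)) * (p - (-p)) = P" unfolding P_def by simp
  have h1: "ff p (-p) \<ge> 1 / (8 * P^2)" using ff_lb[of p "-p", unfolded Pe] P0 by simp
  have h2: "Lf p \<le> P / 8"
  proof -
    have "Lf p = (1 - p^2) * p / (4 * (1 + p^2)^4)" by (simp add: Lf_def)
    also have "\<dots> \<le> (1 - p^2) * p / 4"
      using assms pp add_pos_nonneg[of 1 "p*p"] by (intro divide_left_mono) (auto simp: one_le_power power2_eq_square)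
    also have "\<dots> = P / 8" by (simp add: P_def power2_eq_square)
    finally show ?thesis .
  qed
  have "P / 8 < 1 / (8 * P^2)"
  proof -
    have "P^3 < 1" using P0 P1 by (simp add: power_less_one_iff)
    then show ?thesis using P0 by (simp add: field_simps power2_eq_square power3_eq_cube)
  qed
  then show ?thesis using h1 h2 by linarith
qed

lemma Lf_16: assumes "0 < p" shows "Lf p < 1/16"
proof -
  have a: "(1 + p^2)^4 \<ge> 1 + 4 * p^2" using Bernoulli_inequality[of "p^2" 4] zero_le_power2[of p] by simp
  have "4 * ((1 - p^2) * p) = 1 + 4*p^2 - (1 - 2*p)^2 - 4*p^3" by (simp add: power2_eq_square power3_eq_cube algebra_simps)
  moreover have "p^3 > 0" using assms by simp
  moreover have "(1 - 2*p)^2 \<ge> 0" by simp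
  ultimately have "4 * ((1 - p^2) * p) < 1 + 4 * p^2" by linarith
  with a have b: "4 * ((1 - p^2) * p) < (1 + p^2)^4" by linarith
  have "0 < 1 + p^2" by (simp add: add_pos_nonneg)
  then have X0: "0 < 4 * (1 + p^2)^4" by simp
  have "(1 - p^2) * p < 1/16 * (4 * (1 + p^2)^4)" using b by simp
  then show ?thesis unfolding Lf_def using X0 by (simp only: pos_divide_less_eq)
qed

lemma sq_bound: assumes "0 < (X::real)" "X < 2" shows "1 / (8 * X^2) > 1/32"
proof -
  have "X*X < 2*2" using assms by (intro mult_strict_mono) auto
  then have "8 * X^2 < 32" by (simp add: power2_eq_square)
  moreover have "0 < 8 * X^2" using assms by simp
  ultimately show ?thesis by (simp add: frac_less2)
qed

lemma two_bound: assumes "0 < a" "a < p" "p < 1" shows "ff p a + ff p (-a) > Lf p"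
proof -
  have "p * a < p * 1" using assms by (intro mult_strict_left_mono) auto
  then have pa1: "p * a < 1" using assms by linarith
  have P1: "(1 + p*a) * (p - a) > 0" using assms by (simp add: add_pos_pos)
  have P2: "(1 + p*(-a)) * (p - (-a)) > 0" using assms pa1 by simp
  have "(1 + p*a) * (p - a) < 2 * 1"
    using assms pa1 by (intro mult_strict_mono) auto
  then have "(1 + p*a) * (p - a) < 2" by simp
  then have b1: "1 / (8 * ((1 + p*a) * (p - a))^2) > 1/32"
    by (rule sq_bound[OF P1])
  have "(1 + p*(-a)) * (p - (-a)) < 1 * 2"
    using assms pa1 by (intro mult_le_less_imp_less) auto
  then have "(1 + p*(-a)) * (p - (-a)) < 2" by simp
  then have b2: "1 / (8 * ((1 + p*(-a)) * (p - (-a)))^2) > 1/32"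
    by (rule sq_bound[OF P2])
  show ?thesis using ff_lb[OF P1] ff_lb[OF P2] b1 b2 Lf_16[of p] assms by linarith
qed

lemma pair_pos: assumes "0 < p" "1 < c" "p * c < 1" shows "ff p c + ff p (-c) > 0"
proof -
  define A where "A = (1 + p*c) * (p - c)"
  define B where "B = (1 + p*(-c)) * (p - (-c))"
  have "p * 1 < p * c" using assms by (intro mult_strict_left_mono) auto
  then have pc: "p < c" using assms by linarith
  have A: "A < 0" unfolding A_def using assms pc by (simp add: mult_pos_neg add_pos_pos)
  have B: "B > 0" unfolding B_def using assms by simp
  have AB: "B < - A"
  proof -
    have "- ((1 + p*c) * (p - c)) - (1 + p*(-c)) * (p - (-c)) = 2*p*(c*c - 1)" by (simp add: algebra_simps)
    moreover have "2*p*(c*c-1) > 0"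
    proof -
      have "1 < c*c" using mult_strict_mono[of 1 c 1 c] assms by simp
      then show ?thesis using assms by simp
    qed
    ultimately show ?thesis using A_def B_def by linarith
  qed
  have "ff p c = - ((1 + c^2)^2 / (8 * A^2))" using ff_negP[of p c] A unfolding A_def by simp
  moreover have "ff p (-c) = (1 + c^2)^2 / (8 * B^2)" using ff_posP[of p "-c"] B unfolding B_def by simp
  moreover have "(1 + c^2)^2 / (8 * A^2) < (1 + c^2)^2 / (8 * B^2)"
  proof -
    have "B*B < (-A)*(-A)" using A B AB by (intro mult_strict_mono) auto
    then have "B^2 < A^2" by (simp add: power2_eq_square)
    then have "8 * B^2 < 8 * A^2" by simp
    moreover have "0 < 8 * B^2" using B by simp
    moreover have "0 < (1 + c^2)^2" using add_pos_nonneg[of 1 "c^2"] by simp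
    moreover have "0 < (8 * A^2) * (8 * B^2)" using A B by simp
    ultimately show ?thesis by (intro divide_strict_left_mono) auto
  qed
  ultimately show ?thesis by linarith
qed

lemma ff_pos: assumes "(1 + p*y) * (p - y) > 0" shows "ff p y > 0"
proof -
  have "0 < (1 + y^2)^2" using add_pos_nonneg[of 1 "y^2"] by simp
  moreover have "0 < ((1 + p*y) * (p - y))^2" using assms by (intro zero_less_power)
  then have "0 < 8 * ((1 + p*y) * (p - y))^2" by linarith
  ultimately show ?thesis unfolding ff_posP[OF assms] by simp
qed

lemma pos_pair: assumes "0 < y" "y < p" "p < 1" shows "ff p y + ff p (-y) > 0"
proof -
  have "p * y < p * 1" using assms by (intro mult_strict_left_mono) auto
  then have py: "p * y < 1" using assms by linarith
  have "(1 + p*y) * (p - y) > 0" using assms by (simp add: add_pos_pos)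
  moreover have "(1 + p*(-y)) * (p - (-y)) > 0" using assms py by simp
  ultimately show ?thesis using ff_pos by (simp add: add_pos_pos)
qed

lemma self_pos: assumes "0 < p" "p < 1" shows "ff p (-p) > 0"
proof -
  have "p * p < p * 1" using assms by (intro mult_strict_left_mono) auto
  then have "p * p < 1" using assms by linarith
  then have "(1 + p*(-p)) * (p - (-p)) > 0" using assms by (simp add: mult_pos_pos)
  then show ?thesis by (rule ff_pos)
qed

lemma eqn_real:
  assumes "rel_eq_eqns n m z" "i \<in> {1..n}" "\<forall>j\<in>{1..n}. z j = complex_of_real (x j)"
  shows "Lf (x i) = (\<Sum>j\<in>{1..n} - {i}. m j * ff (x i) (x j))"
proof -
  have e: "(1 - complex_of_real ((cmod (z i))^2)) * z i
          / (4 * (1 + complex_of_real ((cmod (z i))^2))^4)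
        = - (\<Sum>j\<in>{1..n} - {i}.
               complex_of_real (m j * ((cmod (z j))^2 + 1)^2)
                 * (1 + z i * cnj (z j)) * (z j - z i)
               / complex_of_real ((Tij (z i) (z j)) powr (3/2)))"
    using assms(1,2) unfolding rel_eq_eqns_def by blast
  have zi: "z i = complex_of_real (x i)" using assms(2,3) by blast
  have "(\<Sum>j\<in>{1..n} - {i}.
               complex_of_real (m j * ((cmod (z j))^2 + 1)^2)
                 * (1 + z i * cnj (z j)) * (z j - z i)
               / complex_of_real ((Tij (z i) (z j)) powr (3/2)))
      = (\<Sum>j\<in>{1..n} - {i}. complex_of_real (- (m j * ff (x i) (x j))))"
  proof (rule sum.cong)
    fix j assume "j \<in> {1..n} - {i}"
    then have zj: "z j = complex_of_real (x j)" using assms(3) by blast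
    show "complex_of_real (m j * ((cmod (z j))^2 + 1)^2)
                 * (1 + z i * cnj (z j)) * (z j - z i)
               / complex_of_real ((Tij (z i) (z j)) powr (3/2))
          = complex_of_real (- (m j * ff (x i) (x j)))"
      unfolding zi zj by (rule term_real)
  qed simp
  also have "\<dots> = complex_of_real (- (\<Sum>j\<in>{1..n} - {i}. m j * ff (x i) (x j)))"
    by (simp add: sum_negf)
  finally have "complex_of_real (Lf (x i)) = complex_of_real (\<Sum>j\<in>{1..n} - {i}. m j * ff (x i) (x j))"
    using e unfolding zi Lf_complex by simp
  then show ?thesis by (simp only: of_real_eq_iff)
qed

lemma sum_pairs: fixes g :: "nat \<Rightarrow> real" and N :: nat shows "(\<Sum>j\<in>{1..2*N+1}. g j) = g 1 + (\<Sum>k\<in>{1..N}. g (2*k) + g (2*k+1))"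
proof (induction N)
  case 0 then show ?case by simp
next
  case (Suc N)
  have "{1..2 * Suc N + 1} = insert (2*N+3) (insert (2*N+2) {1..2*N+1})" by auto
  then have "(\<Sum>j\<in>{1..2*Suc N+1}. g j) = g (2*N+3) + (g (2*N+2) + (\<Sum>j\<in>{1..2*N+1}. g j))"
    by simp
  also have "\<dots> = g 1 + (\<Sum>k\<in>{1..Suc N}. g (2*k) + g (2*k+1))"
    using Suc by (simp add: algebra_simps eval_nat_numeral)
  finally show ?case .
qed

lemma contra:
  fixes g :: "nat \<Rightarrow> real"
  assumes eq: "Lv = (\<Sum>j\<in>{1..2*N+1} - {i}. g j)"
    and i: "i \<noteq> 1" "i \<in> {1..2*N+1}" and g1: "g 1 \<ge> 0"
    and pairs: "\<forall>k\<in>{1..N}. (if 2*k = i then 0 else g (2*k)) + (if 2*k+1 = i then 0 else g (2*k+1)) \<ge> 0"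
    and k0: "k0 \<in> {1..N}" and big: "(if 2*k0 = i then 0 else g (2*k0)) + (if 2*k0+1 = i then 0 else g (2*k0+1)) > Lv"
  shows False
proof -
  define G where "G j = (if j = i then 0 else g j)" for j
  have "(\<Sum>j\<in>{1..2*N+1}. G j) = G i + (\<Sum>j\<in>{1..2*N+1} - {i}. G j)"
    by (rule sum.remove) (use i in auto)
  also have "\<dots> = (\<Sum>j\<in>{1..2*N+1} - {i}. g j)" by (simp add: G_def)
  finally have s1: "Lv = (\<Sum>j\<in>{1..2*N+1}. G j)" using eq by simp
  have s2: "(\<Sum>j\<in>{1..2*N+1}. G j) = G 1 + (\<Sum>k\<in>{1..N}. G (2*k) + G (2*k+1))"
    by (rule sum_pairs)
  have "G (2*k0) + G (2*k0+1) \<le> (\<Sum>k\<in>{1..N}. G (2*k) + G (2*k+1))"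
  proof -
    have pp: "\<forall>k\<in>{1..N}. G (2*k) + G (2*k+1) \<ge> 0" using pairs unfolding G_def by blast
    show ?thesis using member_le_sum[of k0 "{1..N}" "\<lambda>k. G (2*k) + G (2*k+1)"] pp k0 by auto
  qed
  moreover have "G 1 \<ge> 0" using g1 i by (simp add: G_def)
  moreover have "G (2*k0) + G (2*k0+1) > Lv" using big unfolding G_def by blast
  ultimately show False using s1 s2 by linarith
qed

theorem proposition2:
  fixes n :: nat and m :: "nat \<Rightarrow> real" and z :: "nat \<Rightarrow> complex"
  assumes n_odd: "odd n" and n_ge: "n \<ge> 3"
    and m1: "m 1 > 0"
    and m23: "m 2 = 1" "m 3 = 1"
    and mpairs: "\<forall>k. 2 \<le> k \<and> 2 * k + 1 \<le> n \<longrightarrow> m (2 * k) > 0 \<and> m (2 * k + 1) = m (2 * k)"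
    and z1: "z 1 = 0"
    and zreal: "\<forall>j\<in>{1..n}. Im (z j) = 0"
    and zsym: "\<forall>k. 1 \<le> k \<and> 2 * k + 1 \<le> n \<longrightarrow> z (2 * k + 1) = - z (2 * k)"
    and zpos: "0 < Re (z 2)"
    and zord: "\<forall>k. 1 \<le> k \<and> 2 * k + 3 \<le> n \<longrightarrow> Re (z (2 * k)) < Re (z (2 * k + 2))"
    and cases:
      "Re (z (n - 1)) < 1
       \<or> (n \<ge> 5 \<and> Re (z 2) < 1 \<and> 1 < Re (z 4) \<and> Re (z (n - 1)) < 1 / Re (z 2))
       \<or> (n \<ge> 5 \<and> Re (z (n - 3)) < 1 \<and> 1 < Re (z (n - 1)) \<and> Re (z (n - 1)) < 1 / Re (z (n - 3)))"
  shows "\<not> relative_equilibrium n m z"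
proof
  assume RE: "relative_equilibrium n m z"
  then have eqs: "rel_eq_eqns n m z" by (simp add: relative_equilibrium_def)
  obtain N where nN: "n = 2*N+1" using n_odd oddE by blast
  have N1: "N \<ge> 1" using n_ge nN by simp
  define x where "x j = Re (z j)" for j
  have zx: "\<forall>j\<in>{1..n}. z j = complex_of_real (x j)" using zreal by (auto simp: x_def complex_eq_iff)
  have x1: "x 1 = 0" using z1 by (simp add: x_def)
  have xs: "\<And>k. 1 \<le> k \<Longrightarrow> k \<le> N \<Longrightarrow> x (2*k+1) = - x (2*k)"
    using zsym nN by (auto simp: x_def)
  have xmono: "x (2*k) < x (2*l)" if "1 \<le> k" "k < l" "l \<le> N" for k l
    using that
  proof (induction l)
    case 0 then show ?case by simp
  next
    case (Suc l)
    have "1 \<le> l" "2 * l + 3 \<le> n" using Suc.prems nN by auto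
    then have step: "x (2*l) < x (2*Suc l)" using zord by (auto simp: x_def)
    show ?case
    proof (cases "k = l")
      case True then show ?thesis using step by simp
    next
      case False
      then have "k < l" using Suc.prems by simp
      then show ?thesis using Suc.IH Suc.prems step by simp
    qed
  qed
  have xle: "x 2 \<le> x (2*k) \<and> x (2*k) \<le> x (2*N)" if "1 \<le> k" "k \<le> N" for k
  proof -
    have "x 2 \<le> x (2*k)" using xmono[of 1 k] that by (cases "k = 1") auto
    moreover have "x (2*k) \<le> x (2*N)" using xmono[of k N] that by (cases "k = N") auto
    ultimately show ?thesis by simp
  qed
  have xpos: "0 < x (2*k)" if "1 \<le> k" "k \<le> N" for k
    using xle[OF that] zpos by (simp add: x_def)
  have mk: "m (2*k) > 0 \<and> m (2*k+1) = m (2*k)" if "1 \<le> k" "k \<le> N" for k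
  proof (cases "k = 1")
    case True then show ?thesis using m23 by simp
  next
    case False then show ?thesis using mpairs that nN by auto
  qed
  define PV where "PV ki k = (if k = ki then m (2*k) * ff (x (2*ki)) (- x (2*ki))
      else m (2*k) * (ff (x (2*ki)) (x (2*k)) + ff (x (2*ki)) (- x (2*k))))" for ki k
  have main: False if ki: "1 \<le> ki" "ki \<le> N" and nonneg: "\<forall>k\<in>{1..N}. PV ki k \<ge> 0"
      and k0: "k0 \<in> {1..N}" and big: "PV ki k0 > Lf (x (2*ki))" for ki k0
  proof -
    define p where "p = x (2*ki)"
    define g where "g j = m j * ff p (x j)" for j
    have iin: "2*ki \<in> {1..n}" using ki nN by auto
    have eq: "Lf p = (\<Sum>j\<in>{1..2*N+1} - {2*ki}. g j)"
      using eqn_real[OF eqs iin zx] nN unfolding p_def g_def by simp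
    have p0: "0 < p" using xpos[OF ki] p_def by simp
    have g1: "g 1 \<ge> 0"
    proof -
      have "(1 + p*0) * (p - 0) > 0" using p0 by simp
      then have "ff p 0 > 0" by (rule ff_pos)
      then show ?thesis unfolding g_def using m1 x1 by simp
    qed
    have pv: "(if 2*k = 2*ki then 0 else g (2*k)) + (if 2*k+1 = 2*ki then 0 else g (2*k+1)) = PV ki k"
      if "k \<in> {1..N}" for k
    proof -
      have k: "1 \<le> k" "k \<le> N" using that by auto
      have o: "2*k+1 \<noteq> 2*ki" by presburger
      show ?thesis
      proof (cases "k = ki")
        case True
        then show ?thesis unfolding PV_def g_def p_def using o xs[OF k] mk[OF k] by simp
      next
        case False
        then show ?thesis unfolding PV_def g_def p_def using o xs[OF k] mk[OF k]
          by (simp add: algebra_simps)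
      qed
    qed
    show False
    proof (rule contra[OF eq])
      show "2*ki \<noteq> 1" by presburger
      show "2*ki \<in> {1..2*N+1}" using ki by auto
      show "g 1 \<ge> 0" by (rule g1)
      show "\<forall>k\<in>{1..N}. 0 \<le> (if 2*k = 2*ki then 0 else g (2*k)) + (if 2*k+1 = 2*ki then 0 else g (2*k+1))"
        using pv nonneg by simp
      show "k0 \<in> {1..N}" by (rule k0)
      show "Lf p < (if 2*k0 = 2*ki then 0 else g (2*k0)) + (if 2*k0+1 = 2*ki then 0 else g (2*k0+1))"
        using pv[OF k0] big p_def by simp
    qed
  qed
  have nm1: "n - 1 = 2*N" using nN by simp
  from cases show False
  proof (elim disjE conjE)
    assume c1: "Re (z (n - 1)) < 1"
    define b where "b = x (2*N)"
    have b1: "b < 1" using c1 nm1 by (simp add: b_def x_def)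
    have b0: "0 < b" using xpos[of N] N1 by (simp add: b_def)
    show False
    proof (rule main[of N 1])
      show "1 \<le> N" "N \<le> N" using N1 by auto
      show "1 \<in> {1..N}" using N1 by auto
      show "\<forall>k\<in>{1..N}. 0 \<le> PV N k"
      proof
        fix k assume k: "k \<in> {1..N}"
        show "0 \<le> PV N k"
        proof (cases "k = N")
          case True
          then show ?thesis unfolding PV_def using mk[of N] N1 self_pos[OF b0 b1]
            by (simp add: b_def)
        next
          case False
          then have "k < N" "1 \<le> k" using k by auto
          then have "x (2*k) < b" "0 < x (2*k)" using xmono[of k N] xpos[of k] by (auto simp: b_def)
          then have "ff b (x (2*k)) + ff b (- x (2*k)) > 0" using pos_pair b1 by blast
          then show ?thesis unfolding PV_def using False mk[of k] k
            by (simp add: b_def)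
        qed
      qed
      show "Lf (x (2*N)) < PV N 1"
      proof (cases "N = 1")
        case True
        then show ?thesis unfolding PV_def using self_bound[OF b0 b1] m23 by (simp add: b_def)
      next
        case False
        then have "x 2 < b" "0 < x 2" using xmono[of 1 N] N1 zpos by (auto simp: b_def x_def)
        then have "ff b (x 2) + ff b (- x 2) > Lf b" using two_bound b1 by blast
        then show ?thesis unfolding PV_def using False m23 by (simp add: b_def)
      qed
    qed
  next
    assume n5: "n \<ge> 5" and a1: "Re (z 2) < 1" and c4: "1 < Re (z 4)" and cb: "Re (z (n - 1)) < 1 / Re (z 2)"
    define a where "a = x 2"
    have N2: "N \<ge> 2" using n5 nN by simp
    have a0: "0 < a" "a < 1" using zpos a1 by (auto simp: a_def x_def)
    have ab: "a * x (2*N) < 1" using cb nm1 a0 by (simp add: a_def x_def field_simps)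
    show False
    proof (rule main[of 1 1])
      show "1 \<le> (1::nat)" "1 \<le> N" using N1 by auto
      show "1 \<in> {1..N}" using N1 by auto
      show "\<forall>k\<in>{1..N}. 0 \<le> PV 1 k"
      proof
        fix k assume k: "k \<in> {1..N}"
        show "0 \<le> PV 1 k"
        proof (cases "k = 1")
          case True
          then show ?thesis unfolding PV_def using self_pos[OF a0] m23 by (simp add: a_def)
        next
          case False
          then have k2: "2 \<le> k" "k \<le> N" using k by auto
          have "x 4 \<le> x (2*k)" using xmono[of 2 k] k2 by (cases "k = 2") auto
          then have y1: "1 < x (2*k)" using c4 by (simp add: x_def)
          have "a * x (2*k) \<le> a * x (2*N)" using xle[of k] k2 a0 by (intro mult_left_mono) auto
          then have "a * x (2*k) < 1" using ab by linarith
          then have "ff a (x (2*k)) + ff a (- x (2*k)) > 0" using pair_pos a0 y1 by blast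
          then show ?thesis unfolding PV_def using False mk[of k] k2
            by (simp add: a_def)
        qed
      qed
      show "Lf (x (2*1)) < PV 1 1"
        unfolding PV_def using self_bound[OF a0] m23 by (simp add: a_def)
    qed
  next
    assume n5: "n \<ge> 5" and c1: "Re (z (n - 3)) < 1" and b1: "1 < Re (z (n - 1))"
      and cb: "Re (z (n - 1)) < 1 / Re (z (n - 3))"
    have N2: "N \<ge> 2" using n5 nN by simp
    have nm3: "n - 3 = 2*(N-1)" using nN N2 by simp
    define c where "c = x (2*(N-1))"
    define b where "b = x (2*N)"
    have c0: "0 < c" "c < 1" using xpos[of "N-1"] N2 c1 nm3 by (auto simp: c_def x_def)
    have b1': "1 < b" using b1 nm1 by (simp add: b_def x_def)
    have cb': "c * b < 1" using cb nm1 nm3 c0 by (simp add: b_def c_def x_def field_simps)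
    show False
    proof (rule main[of "N-1" 1])
      show "1 \<le> N - 1" "N - 1 \<le> N" using N2 by auto
      show "1 \<in> {1..N}" using N1 by auto
      show "\<forall>k\<in>{1..N}. 0 \<le> PV (N-1) k"
      proof
        fix k assume k: "k \<in> {1..N}"
        show "0 \<le> PV (N-1) k"
        proof (cases "k = N-1")
          case True
          have "0 < m (2*(N-1))" using mk[of "N-1"] N2 by auto
          then show ?thesis unfolding PV_def using True self_pos[OF c0]
            by (simp add: c_def)
        next
          case False
          show ?thesis
          proof (cases "k = N")
            case True
            then have "ff c b + ff c (- b) > 0" using pair_pos c0 b1' cb' by blast
            then show ?thesis unfolding PV_def using True N2 mk[of N] by (simp add: b_def c_def)
          next
            case False2: False
            then have "k < N-1" "1 \<le> k" using k False by auto
            then have "x (2*k) < c" "0 < x (2*k)" using xmono[of k "N-1"] xpos[of k] N2 by (auto simp: c_def)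
            then have "ff c (x (2*k)) + ff c (- x (2*k)) > 0" using pos_pair c0 by blast
            then show ?thesis unfolding PV_def using False mk[of k] k
              by (simp add: c_def)
          qed
        qed
      qed
      show "Lf (x (2*(N-1))) < PV (N-1) 1"
      proof (cases "N = 2")
        case True
        then show ?thesis unfolding PV_def using self_bound[OF c0] m23 by (simp add: c_def)
      next
        case False
        then have "x 2 < c" "0 < x 2" using xmono[of 1 "N-1"] N2 zpos by (auto simp: c_def x_def)
        then have "ff c (x 2) + ff c (- x 2) > Lf c" using two_bound c0 by blast
        moreover have "(1::nat) \<noteq> N - 1" using False N2 by simp
        ultimately show ?thesis unfolding PV_def using m23 by (simp add: c_def)
      qed
    qed
  qed
qed

end
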